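(* Let $G(t)\in\mathbb{Z}[t]$ with $\deg G=N$, and suppose $G(t)$ is a product of distinct non-constant polynomials, each irreducible over $\mathbb{Z}$ and of degree at most $3$. If $G(t)$ has a local obstruction at the prime $\ell$, then $\ell\le (N_\ell+2)/2$, where $N_\ell$ is the number of (not necessarily distinct) non-constant linear factors in the factorization of $G(t)$ modulo $\ell$ in $\mathbb{F}_\ell[t]$.
   Context: For $G(t)\in\mathbb{Z}[t]$ and a prime $\ell$, $G$ is said to have a local obstruction at $\ell$ if $G(z)\equiv 0\pmod{\ell^2}$ for every $z\in(\mathbb{Z}/\ell^2\mathbb{Z})^*$. *)

theory Defs
  imports "HOL-Computational_Algebra.Computational_Algebra" "Berlekamp_Zassenhaus.Finite_Field"
begin

text \<open>Local obstruction at l: G(z) is divisible by l^2 for every z that is a unit mod l^2,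
  i.e. every integer z coprime to l.\<close>
definition local_obstruction :: "int poly \<Rightarrow> nat \<Rightarrow> bool" where
  "local_obstruction G l \<longleftrightarrow> (\<forall>z::int. coprime z (int l) \<longrightarrow> (int l)^2 dvd poly G z)"

definition num_linear_factors_mod :: "'p::prime_card itself \<Rightarrow> int poly \<Rightarrow> nat" where
  "num_linear_factors_mod _ G =
     size (filter_mset (\<lambda>f. degree f = 1)
       (prime_factorization (map_poly (of_int :: int \<Rightarrow> 'p mod_ring) G)))"

end

theory Submission
  imports Defs
begin

lemma ofint0: "(of_int x :: 'a::prime_card mod_ring) = 0 \<longleftrightarrow> int CARD('a) dvd x"
  by transfer (simp add: mod_eq_0_iff_dvd)

lemma key_dvd:
  fixes G :: "int poly" and u :: int
  assumes h1: "(int CARD('p::prime_card))^2 dvd poly G u"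
    and h2: "(int CARD('p))^2 dvd poly G (u + int CARD('p))"
  shows "[:- (of_int u :: 'p mod_ring), 1:]^2 dvd of_int_poly G"
proof -
  define L where "L = int CARD('p)"
  have L0: "L > 0" unfolding L_def by simp
  define Q where "Q = synthetic_div G u"
  define R where "R = synthetic_div Q u"
  have eG: "G = [:-u,1:]*Q + [:poly G u:]" using synthetic_div_correct'[of u G] Q_def by simp
  have eQ: "Q = [:-u,1:]*R + [:poly Q u:]" using synthetic_div_correct'[of u Q] R_def by simp
  have "poly G (u+L) = poly ([:-u,1:]*Q + [:poly G u:]) (u+L)" using eG by metis
  hence pG: "poly G (u+L) = L * poly Q (u+L) + poly G u" by (simp add: algebra_simps)
  have "poly Q (u+L) = poly ([:-u,1:]*R + [:poly Q u:]) (u+L)" using eQ by metis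
  hence pQ: "poly Q (u+L) = L * poly R (u+L) + poly Q u" by (simp add: algebra_simps)
  have "L^2 dvd L * poly Q (u+L)" using h1 h2 pG unfolding L_def
    by (metis add_diff_cancel_right' dvd_diff)
  hence "L dvd poly Q (u+L)" using L0 by (simp add: power2_eq_square)
  hence dQ: "L dvd poly Q u" using pQ by (metis add_diff_cancel_left' dvd_diff dvd_triv_left)
  have eG2: "G = [:-u,1:]^2 * R + [:-u,1:]*[:poly Q u:] + [:poly G u:]"
  proof -
    have gen: "\<And>X Q R C D G :: int poly. G = X*Q+C \<Longrightarrow> Q = X*R+D \<Longrightarrow> G = X^2*R+X*D+C"
      by (simp add: power2_eq_square distrib_left mult.assoc add.assoc)
    show ?thesis using gen[OF eG eQ] .
  qed
  have z1: "(of_int (poly Q u) :: 'p mod_ring) = 0" unfolding ofint0 using dQ L_def by simp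
  have "L dvd L^2" by (simp add: power2_eq_square)
  hence "L dvd poly G u" using h1 unfolding L_def by (rule dvd_trans)
  hence z2: "(of_int (poly G u) :: 'p mod_ring) = 0" unfolding ofint0 using L_def by simp
  have "(of_int_poly G :: 'p mod_ring poly) = of_int_poly ([:-u,1:]^2 * R + [:-u,1:]*[:poly Q u:] + [:poly G u:])"
    using eG2 by metis
  also have "\<dots> = [:- (of_int u :: 'p mod_ring), 1:]^2 * of_int_poly R" (is ?goal)
  proof -
    have a: "(of_int_poly [:poly Q u:] :: 'p mod_ring poly) = 0" using z1 by (intro poly_eqI) (auto simp: coeff_map_poly coeff_pCons split: nat.split)
    have b: "(of_int_poly [:poly G u:] :: 'p mod_ring poly) = 0" using z2 by (intro poly_eqI) (auto simp: coeff_map_poly coeff_pCons split: nat.split)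
    have c: "(of_int_poly [:-u,1:] :: 'p mod_ring poly) = [:-of_int u, 1:]"
      by (intro poly_eqI) (auto simp: coeff_map_poly coeff_pCons split: nat.split)
    show ?goal
      unfolding of_int_poly_hom.hom_mult of_int_poly_hom.hom_add of_int_poly_hom.hom_power a b c by simp
  qed
  finally show ?thesis by simp
qed

theorem mainTheorem2:
  fixes G :: "int poly" and l :: nat
  assumes "prime l"
    and "CARD('p::prime_card) = l"
    and "\<exists>fs :: int poly list. distinct fs \<and> G = prod_list fs \<and>
           (\<forall>f \<in> set fs. degree f \<ge> 1 \<and> degree f \<le> 3 \<and> irreducible f)"
    and "local_obstruction G l"
  shows "real l \<le> (real (num_linear_factors_mod TYPE('p) G) + 2) / 2"
proof -
  let ?Gb = "of_int_poly G :: 'p mod_ring poly"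
  have lp: "l > 1" using assms(1) prime_gt_1_nat by blast
  obtain fs where fs: "G = prod_list fs"
    "\<forall>f \<in> set fs. degree f \<ge> 1 \<and> degree f \<le> 3 \<and> irreducible f" using assms(3) by blast
  have cont: "content G = 1"
  proof -
    have c1: "content f = 1" if "f \<in># mset fs" for f
    proof -
      have f: "degree f \<noteq> 0" "irreducible f" using fs(2) that by auto
      show ?thesis using nonconst_poly_irreducible_iff[OF f(1)] f(2) by simp
    qed
    have "content G = prod_mset (image_mset content (mset fs))"
      using fs(1) content_prod_mset[of "mset fs"] by (simp add: prod_mset_prod_list)
    also have "image_mset content (mset fs) = image_mset (\<lambda>_. 1) (mset fs)"
      by (rule image_mset_cong) (use c1 in auto)
    also have "prod_mset \<dots> = 1" by simp
    finally show ?thesis .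
  qed
  have Gb0: "?Gb \<noteq> 0"
  proof
    assume z: "?Gb = 0"
    have dc: "\<And>i. int l dvd Polynomial.coeff G i"
    proof -
      fix i
      have "Polynomial.coeff ?Gb i = 0" using z by simp
      hence "(of_int (Polynomial.coeff G i) :: 'p mod_ring) = 0" by (simp add: coeff_map_poly)
      thus "int l dvd Polynomial.coeff G i" unfolding ofint0 using assms(2) by simp
    qed
    have "G = [:int l:] * map_poly (\<lambda>c. c div int l) G"
      by (intro poly_eqI) (simp add: coeff_map_poly dc)
    hence "[:int l:] dvd G" by (metis dvdI)
    hence "int l dvd content G" by (simp add: const_poly_dvd_iff_dvd_content)
    hence "int l dvd 1" using cont by simp
    thus False using lp by simp
  qed
  have dv: "[:-a,1:]^2 dvd ?Gb" if a: "a \<noteq> 0" for a :: "'p mod_ring"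
  proof -
    define u where "u = to_int_mod_ring a"
    have ua: "of_int u = a" unfolding u_def of_int_of_int_mod_ring by simp
    have "u \<in> range (to_int_mod_ring :: 'p mod_ring \<Rightarrow> int)" unfolding u_def by simp
    hence ur: "0 \<le> u" "u < int l" unfolding range_to_int_mod_ring using assms(2) by auto
    have "u \<noteq> 0" using ua a by auto
    hence ur2: "0 < u" using ur by simp
    have pl: "prime (int l)" using assms(1) by simp
    have "\<not> int l dvd u" using ur ur2 zdvd_not_zless by blast
    hence cop: "coprime u (int l)" using prime_imp_coprime[OF pl] by (simp add: ac_simps)
    hence cop2: "coprime (u + int l) (int l)" by (simp add: coprime_iff_gcd_eq_1)
    have h1: "(int l)^2 dvd poly G u" using assms(4) cop unfolding local_obstruction_def by blast
    have h2: "(int l)^2 dvd poly G (u + int l)" using assms(4) cop2 unfolding local_obstruction_def by blast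
    have "[:- (of_int u :: 'p mod_ring), 1:]^2 dvd ?Gb"
      by (rule key_dvd) (use h1 h2 assms(2) in auto)
    thus ?thesis using ua by simp
  qed
  define S where "S = {a::'p mod_ring. a \<noteq> 0}"
  define M where "M = prime_factorization ?Gb"
  define A where "A = (\<Sum>a\<in>S. replicate_mset 2 [:-a,1:])"
  have pr: "prime [:-a,1:]" for a :: "'p mod_ring"
  proof -
    have "prime_elem [:-a,1:]" by (rule prime_elem_linear_field_poly) simp
    moreover have "normalize [:-a,1:] = [:-a,1:]" by (simp add: normalize_poly_def one_pCons[symmetric])
    ultimately show ?thesis by (simp add: prime_def)
  qed
  have cnt: "count M [:-a,1:] \<ge> 2" if "a \<in> S" for a
  proof -
    have "count M [:-a,1:] = multiplicity [:-a,1:] ?Gb"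
      unfolding M_def by (rule count_prime_factorization_prime[OF pr])
    moreover have "multiplicity [:-a,1:] ?Gb \<ge> 2"
      by (rule multiplicity_geI) (use dv that S_def Gb0 in auto)
    ultimately show ?thesis by simp
  qed
  have sub: "A \<subseteq># filter_mset (\<lambda>f. degree f = 1) M"
    unfolding subseteq_mset_def
  proof
    fix x
    show "count A x \<le> count (filter_mset (\<lambda>f. degree f = 1) M) x"
    proof (cases "\<exists>b\<in>S. x = [:-b,1:]")
      case True
      then obtain b where b: "b \<in> S" "x = [:-b,1:]" by blast
      have "count A x = (\<Sum>a\<in>S. if a = b then 2 else 0)"
        unfolding A_def count_sum using b by (intro sum.cong) auto
      also have "\<dots> = 2" using b by simp
      finally show ?thesis using cnt[OF b(1)] b by simp
    next
      case False
      have "count A x = 0"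
        unfolding A_def count_sum using False by (intro sum.neutral) auto
      thus ?thesis by simp
    qed
  qed
  have sA: "size A = 2 * card S" unfolding A_def size_multiset_sum by simp
  have cS: "card S = l - 1"
  proof -
    have "S = UNIV - {0}" unfolding S_def by auto
    hence "card S = CARD('p mod_ring) - 1" by (simp add: card_Diff_singleton)
    thus ?thesis using assms(2) by simp
  qed
  have "size A \<le> num_linear_factors_mod TYPE('p) G"
    unfolding num_linear_factors_mod_def M_def[symmetric] using sub by (rule size_mset_mono)
  hence "2 * (l - 1) \<le> num_linear_factors_mod TYPE('p) G" using sA cS by simp
  hence "real (2 * (l - 1)) \<le> real (num_linear_factors_mod TYPE('p) G)" by linarith
  thus ?thesis using lp by (simp add: of_nat_diff)
qed

end
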